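(* Let $k\ge1$ and let $C_1,\dots,C_t$ be any symmetric chain decomposition of $B_k$ (identified with $\{0,1\}^k$), listed in order of non-increasing length. Define a total order $\preccurlyeq$ on $B_k$ by $\mathbf b\preccurlyeq\mathbf b'$ iff $\mathbf b\in C_i$, $\mathbf b'\in C_j$ with $i<j$, or $\mathbf b,\mathbf b'$ lie in the same $C_i$ and $\mathbf b\subseteq\mathbf b'$. Let $P=\bigcup_{1\le i\le j\le t}P_{ij}$ where $P_{ij}=C_i\times C_j$ for $i<j$ and $P_{ii}=\{(\mathbf b,\mathbf b')\in C_i\times C_i:\mathbf b\subseteq\mathbf b'\}$, and identify $(\mathbf b,\mathbf b')\in P$ with the concatenated string $\mathbf b\mathbf b'^{\,r}\in B_{2k}$ ($\mathbf b'^{\,r}$ the reverse of $\mathbf b'$), with the induced inclusion order. Then $P$ can be partitioned into chains each of which is a saturated chain $x_1<\dots<x_\ell$ in $B_{2k}$ with $|x_1|+|x_\ell|=2k$; and the map $(\mathbf b,\mathbf b')\mapsto\{\mathbf b\mathbf b'^{\,r},\mathbf b'\mathbf b^{\,r}\}$ is an order-preserving bijection from $P$ onto $B_{2k}/G$, where $G=\{1,\rho\}$ with $\rho=(1\;2k)(2\;2k{-}1)\cdots(k\;k{+}1)$.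
   Context: $B_k$ is the Boolean lattice of subsets of $[k]$, identified with binary strings of length $k$. A symmetric chain decomposition of a ranked poset is a partition into saturated chains $x_1<\dots<x_\ell$ with $r(x_1)+r(x_\ell)$ equal to the rank of the poset. For $G\le S_{2k}$, $B_{2k}/G$ is the poset of $G$-orbits $[A]$ ordered by $[A]\le[B]$ iff $X\subseteq Y$ for some $X\in[A]$, $Y\in[B]$. *)

theory Defs
  imports Main
begin

text \<open>Elements of B_n are binary strings (bool lists) of length n; position i holds True
  iff the element i (0-indexed) belongs to the subset.\<close>

definition Bk :: "nat \<Rightarrow> bool list set" where
  "Bk n = {x. length x = n}"

definition subs :: "bool list \<Rightarrow> bool list \<Rightarrow> bool" where
  "subs x y \<longleftrightarrow> length x = length y \<and> (\<forall>i<length x. x ! i \<longrightarrow> y ! i)"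

definition wt :: "bool list \<Rightarrow> nat" where
  "wt x = length (filter id x)"

definition sat_chain :: "nat \<Rightarrow> bool list list \<Rightarrow> bool" where
  "sat_chain n D \<longleftrightarrow> D \<noteq> [] \<and> set D \<subseteq> Bk n \<and>
     (\<forall>i. Suc i < length D \<longrightarrow> subs (D ! i) (D ! Suc i) \<and> wt (D ! Suc i) = wt (D ! i) + 1)"

definition sym_chain :: "nat \<Rightarrow> bool list list \<Rightarrow> bool" where
  "sym_chain n D \<longleftrightarrow> sat_chain n D \<and> wt (hd D) + wt (last D) = n"

definition is_scd :: "nat \<Rightarrow> bool list list list \<Rightarrow> bool" where
  "is_scd n Cs \<longleftrightarrow> (\<forall>C\<in>set Cs. sym_chain n C) \<and>
     (\<forall>x\<in>Bk n. \<exists>!(i, j). i < length Cs \<and> j < length (Cs ! i) \<and> Cs ! i ! j = x)"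

definition prec :: "bool list list list \<Rightarrow> bool list \<Rightarrow> bool list \<Rightarrow> bool" where
  "prec Cs b b' \<longleftrightarrow>
     (\<exists>i j. i < j \<and> j < length Cs \<and> b \<in> set (Cs ! i) \<and> b' \<in> set (Cs ! j)) \<or>
     (\<exists>i<length Cs. b \<in> set (Cs ! i) \<and> b' \<in> set (Cs ! i) \<and> subs b b')"

definition Pblock :: "bool list list list \<Rightarrow> nat \<Rightarrow> nat \<Rightarrow> (bool list \<times> bool list) set" where
  "Pblock Cs i j = (if i < j then set (Cs ! i) \<times> set (Cs ! j)
                    else {(b, b'). b \<in> set (Cs ! i) \<and> b' \<in> set (Cs ! i) \<and> subs b b'})"

definition Pset :: "bool list list list \<Rightarrow> (bool list \<times> bool list) set" where
  "Pset Cs = (\<Union>j\<in>{0..<length Cs}. \<Union>i\<in>{0..j}. Pblock Cs i j)"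

definition emb :: "bool list \<times> bool list \<Rightarrow> bool list" where
  "emb p = fst p @ rev (snd p)"

text \<open>Action of a permutation sigma of {0..<n} on strings of length n (A maps to sigma ` A).\<close>
definition act :: "(nat \<Rightarrow> nat) \<Rightarrow> bool list \<Rightarrow> bool list" where
  "act \<sigma> x = map (\<lambda>i. \<exists>j<length x. x ! j \<and> \<sigma> j = i) [0..<length x]"

definition orbit :: "(nat \<Rightarrow> nat) set \<Rightarrow> bool list \<Rightarrow> bool list set" where
  "orbit G x = (\<lambda>\<sigma>. act \<sigma> x) ` G"

definition quot :: "nat \<Rightarrow> (nat \<Rightarrow> nat) set \<Rightarrow> bool list set set" where
  "quot n G = orbit G ` Bk n"

definition orb_le :: "bool list set \<Rightarrow> bool list set \<Rightarrow> bool" where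
  "orb_le A B \<longleftrightarrow> (\<exists>X\<in>A. \<exists>Y\<in>B. subs X Y)"

text \<open>rho = (1 2k)(2 2k-1)...(k k+1), written 0-indexed on {0..<n} with n = 2k.\<close>
definition rho :: "nat \<Rightarrow> nat \<Rightarrow> nat" where
  "rho n i = (if i < n then n - 1 - i else i)"

definition Gk :: "nat \<Rightarrow> (nat \<Rightarrow> nat) set" where
  "Gk k = {id, rho (2 * k)}"

end

theory Submission imports Defs begin

definition hidx :: "nat \<Rightarrow> nat \<Rightarrow> nat \<Rightarrow> nat \<times> nat" where
  "hidx m s u = (if u < m - s then (u, s) else (m - 1 - s, u - (m - s) + s + 1))"
definition hlen :: "nat \<Rightarrow> nat \<Rightarrow> nat \<Rightarrow> nat" where
  "hlen m n s = m + n - 1 - 2 * s"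
definition didx :: "nat \<Rightarrow> nat \<Rightarrow> nat \<Rightarrow> nat \<times> nat" where
  "didx m s u = (if u < m - 2 * s then (s, s + u) else (u - (m - 2 * s) + s + 1, m - 1 - s))"
definition dlen :: "nat \<Rightarrow> nat \<Rightarrow> nat" where
  "dlen m s = 2 * m - 1 - 4 * s"

lemma H1: assumes "s < n" "n \<le> m" "u < hlen m n s"
  shows "fst (hidx m s u) < m \<and> snd (hidx m s u) < n \<and> min (snd (hidx m s u)) (m - 1 - fst (hidx m s u)) = s"
  using assms unfolding hidx_def hlen_def by auto

lemma H2: assumes "s < n" "n \<le> m" "Suc u < hlen m n s"
  shows "(fst (hidx m s (Suc u)) = Suc (fst (hidx m s u)) \<and> snd (hidx m s (Suc u)) = snd (hidx m s u)) \<or>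
         (fst (hidx m s (Suc u)) = fst (hidx m s u) \<and> snd (hidx m s (Suc u)) = Suc (snd (hidx m s u)))"
  using assms unfolding hidx_def hlen_def by auto

lemma H3: assumes "n \<le> m" "x < m" "y < n" "s = min y (m - 1 - x)"
  shows "s < n \<and> (\<exists>u < hlen m n s. hidx m s u = (x, y))"
proof (cases "y \<le> m - 1 - x")
  case True
  then show ?thesis using assms by (intro conjI exI[of _ x]) (auto simp: hidx_def hlen_def)
next
  case False
  then show ?thesis using assms
    by (intro conjI exI[of _ "m - s + (y - s - 1)"]) (auto simp: hidx_def hlen_def)
qed

lemma H4: assumes "s < n" "n \<le> m"
  shows "hlen m n s > 0 \<and> hidx m s 0 = (0, s) \<and> hidx m s (hlen m n s - 1) = (m - 1 - s, n - 1)"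
  using assms unfolding hidx_def hlen_def by auto

lemma D1: assumes "2 * s < m" "u < dlen m s"
  shows "fst (didx m s u) < m \<and> snd (didx m s u) < m \<and> fst (didx m s u) \<le> snd (didx m s u) \<and>
     min (fst (didx m s u)) (m - 1 - snd (didx m s u)) = s"
  using assms unfolding didx_def dlen_def by auto

lemma D2: assumes "2 * s < m" "Suc u < dlen m s"
  shows "(fst (didx m s (Suc u)) = Suc (fst (didx m s u)) \<and> snd (didx m s (Suc u)) = snd (didx m s u)) \<or>
         (fst (didx m s (Suc u)) = fst (didx m s u) \<and> snd (didx m s (Suc u)) = Suc (snd (didx m s u)))"
  using assms unfolding didx_def dlen_def by auto

lemma D3: assumes "x \<le> y" "y < m" "s = min x (m - 1 - y)"
  shows "2 * s < m \<and> (\<exists>u < dlen m s. didx m s u = (x, y))"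
proof (cases "x \<le> m - 1 - y")
  case True
  then show ?thesis using assms by (intro conjI exI[of _ "y - x"]) (auto simp: didx_def dlen_def)
next
  case False
  then show ?thesis using assms
    by (intro conjI exI[of _ "m - 2 * s + (x - s - 1)"]) (auto simp: didx_def dlen_def)
qed

lemma D4: assumes "2 * s < m"
  shows "dlen m s > 0 \<and> didx m s 0 = (s, s) \<and> didx m s (dlen m s - 1) = (m - 1 - s, m - 1 - s)"
  using assms unfolding didx_def dlen_def by auto


lemma wt_append[simp]: "wt (a @ b) = wt a + wt b" by (simp add: wt_def)
lemma wt_rev[simp]: "wt (rev a) = wt a" by (simp add: wt_def rev_filter[symmetric])

lemma subs_wt: "subs a b \<Longrightarrow> wt a \<le> wt b"
  unfolding subs_def wt_def length_filter_conv_card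
  by (intro card_mono) auto

lemma subs_refl: "subs a a" by (simp add: subs_def)
lemma subs_trans: "subs a b \<Longrightarrow> subs b c \<Longrightarrow> subs a c" by (simp add: subs_def)
lemma subs_rev: "subs a b \<Longrightarrow> subs (rev a) (rev b)"
  by (auto simp: subs_def rev_nth)
lemma subs_app: "subs a c \<Longrightarrow> subs b d \<Longrightarrow> subs (a @ b) (c @ d)"
  by (auto simp: subs_def nth_append)

lemma sat_distinct: assumes "sat_chain n D" shows "distinct D"
proof -
  have w: "\<And>u. u < length D \<Longrightarrow> wt (D ! u) = wt (D ! 0) + u"
  proof -
    fix u show "u < length D \<Longrightarrow> wt (D ! u) = wt (D ! 0) + u"
      by (induction u) (use assms in \<open>auto simp: sat_chain_def\<close>)
  qed
  show ?thesis unfolding distinct_conv_nth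
    using w by (metis add_left_cancel)
qed

locale ctx =
  fixes k :: nat and Cs :: "bool list list list"
  assumes scd: "is_scd k Cs"
    and srt: "sorted_wrt (\<ge>) (map length Cs)"
begin

lemma ch: "i < length Cs \<Longrightarrow> sym_chain k (Cs ! i)"
  using scd unfolding is_scd_def by auto

lemma m_pos: "i < length Cs \<Longrightarrow> length (Cs ! i) > 0"
  using ch[of i] unfolding sym_chain_def sat_chain_def by auto

lemma elen: "i < length Cs \<Longrightarrow> x < length (Cs ! i) \<Longrightarrow> length (Cs ! i ! x) = k"
  using ch[of i] unfolding sym_chain_def sat_chain_def Bk_def by (auto dest!: nth_mem)

lemma cov: "i < length Cs \<Longrightarrow> Suc x < length (Cs ! i) \<Longrightarrow>
   subs (Cs ! i ! x) (Cs ! i ! Suc x) \<and> wt (Cs ! i ! Suc x) = wt (Cs ! i ! x) + 1"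
  using ch[of i] unfolding sym_chain_def sat_chain_def by auto

lemma wt_el: "i < length Cs \<Longrightarrow> x < length (Cs ! i) \<Longrightarrow> wt (Cs ! i ! x) = wt (Cs ! i ! 0) + x"
  by (induction x) (auto dest: cov)

lemma subs_mono: "i < length Cs \<Longrightarrow> x + d < length (Cs ! i) \<Longrightarrow> subs (Cs ! i ! x) (Cs ! i ! (x + d))"
proof (induction d)
  case 0 then show ?case by (simp add: subs_refl)
next
  case (Suc d)
  then show ?case using cov[of i "x + d"] subs_trans by auto
qed

lemma ends: "i < length Cs \<Longrightarrow> 2 * wt (Cs ! i ! 0) + length (Cs ! i) - 1 = k"
proof -
  assume i: "i < length Cs"
  have ne: "Cs ! i \<noteq> []" using m_pos[OF i] by auto
  have "wt (hd (Cs ! i)) + wt (last (Cs ! i)) = k" using ch[OF i] by (simp add: sym_chain_def)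
  then show ?thesis using wt_el[OF i, of "length (Cs ! i) - 1"] m_pos[OF i] ne
    by (simp add: hd_conv_nth last_conv_nth)
qed

lemma inj: "i < length Cs \<Longrightarrow> x < length (Cs ! i) \<Longrightarrow> i' < length Cs \<Longrightarrow> x' < length (Cs ! i') \<Longrightarrow>
   Cs ! i ! x = Cs ! i' ! x' \<Longrightarrow> i = i' \<and> x = x'"
proof -
  assume a: "i < length Cs" "x < length (Cs ! i)" "i' < length Cs" "x' < length (Cs ! i')"
    "Cs ! i ! x = Cs ! i' ! x'"
  have "Cs ! i ! x \<in> Bk k" using elen a by (simp add: Bk_def)
  then have "\<exists>!(a, b). a < length Cs \<and> b < length (Cs ! a) \<and> Cs ! a ! b = Cs ! i ! x"
    using scd unfolding is_scd_def by blast
  then show ?thesis using a by (metis (mono_tags, lifting) case_prodI old.prod.inject)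
qed

lemma srj: "length b = k \<Longrightarrow> \<exists>i x. i < length Cs \<and> x < length (Cs ! i) \<and> Cs ! i ! x = b"
proof -
  assume "length b = k"
  then have "b \<in> Bk k" by (simp add: Bk_def)
  then have "\<exists>!(a, c). a < length Cs \<and> c < length (Cs ! a) \<and> Cs ! a ! c = b"
    using scd unfolding is_scd_def by blast
  then show ?thesis by auto
qed

lemma mle: "i < j \<Longrightarrow> j < length Cs \<Longrightarrow> length (Cs ! j) \<le> length (Cs ! i)"
  using srt unfolding sorted_wrt_iff_nth_less by auto

lemma Pchar: "p \<in> Pset Cs \<longleftrightarrow> (\<exists>i j x y. p = (Cs ! i ! x, Cs ! j ! y) \<and> j < length Cs \<and>
   x < length (Cs ! i) \<and> y < length (Cs ! j) \<and> (i < j \<or> i = j \<and> x \<le> y))" (is "?L \<longleftrightarrow> ?R")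
proof
  assume ?L
  then obtain i j where ij: "j < length Cs" "i \<le> j" "p \<in> Pblock Cs i j"
    unfolding Pset_def by auto
  show ?R
  proof (cases "i < j")
    case True
    then obtain b b' where "p = (b, b')" "b \<in> set (Cs ! i)" "b' \<in> set (Cs ! j)"
      using ij by (auto simp: Pblock_def)
    then show ?thesis using True ij by (metis in_set_conv_nth)
  next
    case False
    then have e: "i = j" using ij by auto
    then obtain b b' where bb: "p = (b, b')" "b \<in> set (Cs ! i)" "b' \<in> set (Cs ! i)" "subs b b'"
      using ij by (auto simp: Pblock_def)
    then obtain x y where xy: "x < length (Cs ! i)" "y < length (Cs ! i)" "b = Cs ! i ! x" "b' = Cs ! i ! y"
      by (metis in_set_conv_nth)
    have "wt b \<le> wt b'" using subs_wt bb by auto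
    then have "x \<le> y" using xy wt_el[of i] ij e by auto
    then show ?thesis using xy bb e ij by blast
  qed
next
  assume ?R
  then obtain i j x y where r: "p = (Cs ! i ! x, Cs ! j ! y)" "j < length Cs"
   "x < length (Cs ! i)" "y < length (Cs ! j)" "i < j \<or> i = j \<and> x \<le> y" by blast
  have "p \<in> Pblock Cs i j"
  proof (cases "i < j")
    case True then show ?thesis using r by (auto simp: Pblock_def)
  next
    case False
    then have "i = j" "x \<le> y" using r by auto
    moreover have "subs (Cs ! i ! x) (Cs ! i ! (x + (y - x)))"
      using subs_mono[of i x "y - x"] r calculation by auto
    ultimately show ?thesis using r by (auto simp: Pblock_def)
  qed
  moreover have "i \<le> j" using r by auto
  ultimately show ?L using r unfolding Pset_def by (intro UN_I[of j] UN_I[of i]) auto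
qed

end

definition glen :: "bool list list list \<Rightarrow> nat \<Rightarrow> nat \<Rightarrow> nat \<Rightarrow> nat" where
  "glen Cs i j s = (if i < j then hlen (length (Cs ! i)) (length (Cs ! j)) s else dlen (length (Cs ! i)) s)"
definition gidx :: "bool list list list \<Rightarrow> nat \<Rightarrow> nat \<Rightarrow> nat \<Rightarrow> nat \<Rightarrow> nat \<times> nat" where
  "gidx Cs i j s = (if i < j then hidx (length (Cs ! i)) s else didx (length (Cs ! i)) s)"
definition chn :: "bool list list list \<Rightarrow> nat \<times> nat \<times> nat \<Rightarrow> (bool list \<times> bool list) list" where
  "chn Cs c = (case c of (i, j, s) \<Rightarrow>
     map (\<lambda>u. (Cs ! i ! fst (gidx Cs i j s u), Cs ! j ! snd (gidx Cs i j s u))) [0..<glen Cs i j s])"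
definition IdS :: "bool list list list \<Rightarrow> (nat \<times> nat \<times> nat) set" where
  "IdS Cs = {(i, j, s). i < j \<and> j < length Cs \<and> s < length (Cs ! j)} \<union>
            {(i, j, s). i = j \<and> i < length Cs \<and> 2 * s < length (Cs ! i)}"

context ctx begin

lemma gen_chain:
  assumes ij: "i < length Cs" "j < length Cs" and L: "L > 0"
    and valid: "\<And>u. u < L \<Longrightarrow> fst (g u) < length (Cs ! i) \<and> snd (g u) < length (Cs ! j)"
    and step: "\<And>u. Suc u < L \<Longrightarrow> (fst (g (Suc u)) = Suc (fst (g u)) \<and> snd (g (Suc u)) = snd (g u)) \<or>
         (fst (g (Suc u)) = fst (g u) \<and> snd (g (Suc u)) = Suc (snd (g u)))"
    and sm: "wt (Cs ! i ! 0) + fst (g 0) + wt (Cs ! j ! 0) + snd (g 0) + wt (Cs ! i ! 0) + fst (g (L - 1))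
           + wt (Cs ! j ! 0) + snd (g (L - 1)) = 2 * k"
  shows "sym_chain (2 * k) (map emb (map (\<lambda>u. (Cs ! i ! fst (g u), Cs ! j ! snd (g u))) [0..<L]))"
proof -
  define f where "f u = emb (Cs ! i ! fst (g u), Cs ! j ! snd (g u))" for u
  have eq: "map emb (map (\<lambda>u. (Cs ! i ! fst (g u), Cs ! j ! snd (g u))) [0..<L]) = map f [0..<L]"
    by (simp add: f_def)
  have wtf: "wt (f u) = wt (Cs ! i ! 0) + fst (g u) + wt (Cs ! j ! 0) + snd (g u)" if "u < L" for u
    using valid[OF that] wt_el ij by (simp add: f_def emb_def)
  have lenf: "length (f u) = 2 * k" if "u < L" for u
    using valid[OF that] elen ij by (simp add: f_def emb_def)
  have stp: "subs (f u) (f (Suc u)) \<and> wt (f (Suc u)) = wt (f u) + 1" if su: "Suc u < L" for u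
  proof -
    have v1: "fst (g (Suc u)) < length (Cs ! i)" "snd (g (Suc u)) < length (Cs ! j)"
      "fst (g u) < length (Cs ! i)" "snd (g u) < length (Cs ! j)" using valid su by auto
    have "subs (Cs ! i ! fst (g u)) (Cs ! i ! fst (g (Suc u))) \<and> subs (Cs ! j ! snd (g u)) (Cs ! j ! snd (g (Suc u)))"
      using step[OF su] cov[OF ij(1)] cov[OF ij(2)] v1 subs_refl by auto
    then have "subs (f u) (f (Suc u))" by (simp add: f_def emb_def subs_app subs_rev)
    moreover have "wt (f (Suc u)) = wt (f u) + 1" using wtf[of u] wtf[of "Suc u"] su step[OF su] by auto
    ultimately show ?thesis by auto
  qed
  show ?thesis unfolding eq sym_chain_def sat_chain_def
    using L stp lenf wtf[of 0] wtf[of "L - 1"] sm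
    by (auto simp: Bk_def hd_conv_nth last_conv_nth)
qed

lemma chn_sym: assumes c: "(i, j, s) \<in> IdS Cs" shows "sym_chain (2 * k) (map emb (chn Cs (i, j, s)))"
proof (cases "i < j")
  case True
  let ?m = "length (Cs ! i)" and ?n = "length (Cs ! j)"
  have a: "s < ?n" "?n \<le> ?m" "j < length Cs" "i < length Cs" using c True mle by (auto simp: IdS_def)
  show ?thesis
    apply (simp only: chn_def glen_def gidx_def if_P[OF True] prod.case)
    apply (rule gen_chain)
    using a H1[OF a(1,2)] H2[OF a(1,2)] H4[OF a(1,2)] ends[of i] ends[of j] m_pos[of i] m_pos[of j]
    by auto
next
  case False
  let ?m = "length (Cs ! i)"
  have a: "2 * s < ?m" "i = j" "i < length Cs" using c False by (auto simp: IdS_def)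
  show ?thesis
    apply (simp only: chn_def glen_def gidx_def if_not_P[OF False] prod.case)
    apply (rule gen_chain)
    using a D1[OF a(1)] D2[OF a(1)] D4[OF a(1)] ends[of i] m_pos[of i]
    by auto
qed

lemma chn_mem: assumes c: "(i, j, s) \<in> IdS Cs" and p: "p \<in> set (chn Cs (i, j, s))"
  shows "\<exists>x y. p = (Cs ! i ! x, Cs ! j ! y) \<and> j < length Cs \<and> x < length (Cs ! i) \<and> y < length (Cs ! j) \<and>
     (i < j \<or> i = j \<and> x \<le> y) \<and>
     s = (if i < j then min y (length (Cs ! i) - 1 - x) else min x (length (Cs ! i) - 1 - y))"
proof (cases "i < j")
  case True
  have a: "s < length (Cs ! j)" "length (Cs ! j) \<le> length (Cs ! i)" "j < length Cs"
    using c True mle by (auto simp: IdS_def)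
  obtain u where u: "u < hlen (length (Cs ! i)) (length (Cs ! j)) s"
    "p = (Cs ! i ! fst (hidx (length (Cs ! i)) s u), Cs ! j ! snd (hidx (length (Cs ! i)) s u))"
    using p True by (auto simp: chn_def glen_def gidx_def)
  show ?thesis using H1[OF a(1,2) u(1)] u a True
    by (intro exI[of _ "fst (hidx (length (Cs ! i)) s u)"] exI[of _ "snd (hidx (length (Cs ! i)) s u)"] conjI) auto
next
  case False
  have a: "2 * s < length (Cs ! i)" "i = j" "i < length Cs" using c False by (auto simp: IdS_def)
  obtain u where u: "u < dlen (length (Cs ! i)) s"
    "p = (Cs ! i ! fst (didx (length (Cs ! i)) s u), Cs ! j ! snd (didx (length (Cs ! i)) s u))"
    using p False by (auto simp: chn_def glen_def gidx_def)
  show ?thesis using D1[OF a(1) u(1)] u a False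
    by (intro exI[of _ "fst (didx (length (Cs ! i)) s u)"] exI[of _ "snd (didx (length (Cs ! i)) s u)"] conjI) auto
qed

lemma chn_sub: "c \<in> IdS Cs \<Longrightarrow> set (chn Cs c) \<subseteq> Pset Cs"
  using chn_mem Pchar by (cases c) blast

lemma chn_uniq: assumes "c \<in> IdS Cs" "c' \<in> IdS Cs" "p \<in> set (chn Cs c)" "p \<in> set (chn Cs c')"
  shows "c = c'"
proof -
  obtain i j s i' j' s' where cc: "c = (i, j, s)" "c' = (i', j', s')" by (cases c, cases c') auto
  obtain x y where 1: "p = (Cs ! i ! x, Cs ! j ! y) \<and> j < length Cs \<and> x < length (Cs ! i) \<and> y < length (Cs ! j) \<and>
     (i < j \<or> i = j \<and> x \<le> y) \<and>
     s = (if i < j then min y (length (Cs ! i) - 1 - x) else min x (length (Cs ! i) - 1 - y))"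
    using chn_mem assms cc by blast
  obtain x' y' where 2: "p = (Cs ! i' ! x', Cs ! j' ! y') \<and> j' < length Cs \<and> x' < length (Cs ! i') \<and> y' < length (Cs ! j') \<and>
     (i' < j' \<or> i' = j' \<and> x' \<le> y') \<and>
     s' = (if i' < j' then min y' (length (Cs ! i') - 1 - x') else min x' (length (Cs ! i') - 1 - y'))"
    using chn_mem assms cc by blast
  have "i = i' \<and> x = x'" using inj[of i x i' x'] 1 2 by auto
  moreover have "j = j' \<and> y = y'" using inj[of j y j' y'] 1 2 by auto
  ultimately show ?thesis using 1 2 cc by auto
qed

lemma chn_cover: assumes "p \<in> Pset Cs" shows "\<exists>c \<in> IdS Cs. p \<in> set (chn Cs c)"
proof -
  obtain i j x y where r: "p = (Cs ! i ! x, Cs ! j ! y)" "j < length Cs"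
   "x < length (Cs ! i)" "y < length (Cs ! j)" "i < j \<or> i = j \<and> x \<le> y" using assms Pchar by blast
  show ?thesis
  proof (cases "i < j")
    case True
    define s where "s = min y (length (Cs ! i) - 1 - x)"
    obtain u where u: "s < length (Cs ! j)" "u < hlen (length (Cs ! i)) (length (Cs ! j)) s"
      "hidx (length (Cs ! i)) s u = (x, y)"
      using H3[OF mle[OF True r(2)] r(3,4) s_def] by auto
    have "p \<in> set (chn Cs (i, j, s))" unfolding chn_def using True u r
      by (auto simp: glen_def gidx_def image_iff intro!: bexI[of _ u])
    moreover have "(i, j, s) \<in> IdS Cs" using True u r by (auto simp: IdS_def)
    ultimately show ?thesis by blast
  next
    case False
    then have e: "i = j" "x \<le> y" using r by auto
    define s where "s = min x (length (Cs ! i) - 1 - y)"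
    obtain u where u: "2 * s < length (Cs ! i)" "u < dlen (length (Cs ! i)) s"
      "didx (length (Cs ! i)) s u = (x, y)"
      using D3[OF e(2) _ s_def] r e by auto
    have "p \<in> set (chn Cs (i, j, s))" unfolding chn_def using False u r e
      by (auto simp: glen_def gidx_def image_iff intro!: bexI[of _ u])
    moreover have "(i, j, s) \<in> IdS Cs" using e u r by (auto simp: IdS_def)
    ultimately show ?thesis by blast
  qed
qed

lemma IdS_fin: "finite (IdS Cs)"
proof -
  have "IdS Cs \<subseteq> {..<length Cs} \<times> {..<length Cs} \<times> {..<Suc k}"
    using ends m_pos unfolding IdS_def by fastforce
  then show ?thesis by (rule finite_subset) auto
qed

lemma part: "\<exists>Ds :: (bool list \<times> bool list) list list.
            (\<forall>D\<in>set Ds. sym_chain (2 * k) (map emb D) \<and> set D \<subseteq> Pset Cs) \<and>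
            (\<forall>p\<in>Pset Cs. \<exists>!(i, j). i < length Ds \<and> j < length (Ds ! i) \<and> Ds ! i ! j = p)"
proof -
  obtain ids where ids: "set ids = IdS Cs" "distinct ids" using finite_distinct_list[OF IdS_fin] by blast
  define Ds where "Ds = map (chn Cs) ids"
  have sy: "\<And>c. c \<in> IdS Cs \<Longrightarrow> sym_chain (2 * k) (map emb (chn Cs c))"
    using chn_sym by auto
  have dis: "\<And>c. c \<in> IdS Cs \<Longrightarrow> distinct (chn Cs c)"
    using sy sat_distinct distinct_map unfolding sym_chain_def by blast
  have "\<forall>D\<in>set Ds. sym_chain (2 * k) (map emb D) \<and> set D \<subseteq> Pset Cs"
    using sy chn_sub ids unfolding Ds_def by auto
  moreover have "\<exists>!(i, j). i < length Ds \<and> j < length (Ds ! i) \<and> Ds ! i ! j = p" if p: "p \<in> Pset Cs" for p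
  proof -
    obtain c where c: "c \<in> IdS Cs" "p \<in> set (chn Cs c)" using chn_cover[OF p] by blast
    obtain a where a: "a < length ids" "ids ! a = c" using c ids by (metis in_set_conv_nth)
    obtain b where b: "b < length (chn Cs c)" "chn Cs c ! b = p" using c by (metis in_set_conv_nth)
    show ?thesis
    proof (rule ex1I[of _ "(a, b)"])
      show "case (a, b) of (i, j) \<Rightarrow> i < length Ds \<and> j < length (Ds ! i) \<and> Ds ! i ! j = p"
        using a b by (simp add: Ds_def)
    next
      fix y assume y: "case y of (i, j) \<Rightarrow> i < length Ds \<and> j < length (Ds ! i) \<and> Ds ! i ! j = p"
      obtain a' b' where yy: "y = (a', b')" by (cases y)
      have a': "a' < length ids" "b' < length (chn Cs (ids ! a'))" "chn Cs (ids ! a') ! b' = p"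
        using y yy by (auto simp: Ds_def)
      have "ids ! a' \<in> IdS Cs" using a' ids by auto
      moreover have "p \<in> set (chn Cs (ids ! a'))" using a' by (metis nth_mem)
      ultimately have "ids ! a' = c" using chn_uniq c by blast
      then have "a' = a" using a a' ids nth_eq_iff_index_eq by metis
      moreover have "b' = b" using a' b \<open>ids ! a' = c\<close> dis[OF c(1)] nth_eq_iff_index_eq by metis
      ultimately show "y = (a, b)" using yy by simp
    qed
  qed
  ultimately show ?thesis by blast
qed

end

lemma act_id: "act id x = x"
  by (rule nth_equalityI) (auto simp: act_def)

lemma act_rho: "length x = n \<Longrightarrow> act (rho n) x = rev x"
proof (rule nth_equalityI)
  assume l: "length x = n"
  show "length (act (rho n) x) = length (rev x)" by (simp add: act_def)
  fix i assume "i < length (act (rho n) x)"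
  then have i: "i < n" using l by (simp add: act_def)
  have "(\<exists>j<n. x ! j \<and> rho n j = i) \<longleftrightarrow> x ! (n - 1 - i)"
  proof
    assume "\<exists>j<n. x ! j \<and> rho n j = i"
    then obtain j where "j < n" "x ! j" "n - 1 - j = i" by (auto simp: rho_def)
    moreover then have "j = n - 1 - i" by auto
    ultimately show "x ! (n - 1 - i)" by simp
  next
    assume "x ! (n - 1 - i)"
    then show "\<exists>j<n. x ! j \<and> rho n j = i" using i by (intro exI[of _ "n - 1 - i"]) (auto simp: rho_def)
  qed
  then show "act (rho n) x ! i = rev x ! i" using i l by (simp add: act_def rev_nth)
qed

lemma quot_eq: "quot (2 * k) (Gk k) = (\<lambda>x. {x, rev x}) ` Bk (2 * k)"
  unfolding quot_def orbit_def Gk_def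
  by (intro image_cong refl) (auto simp: act_id act_rho Bk_def)

context ctx begin

lemma Plen: "(b, b') \<in> Pset Cs \<Longrightarrow> length b = k \<and> length b' = k"
  using Pchar elen by (metis (no_types, lifting) Pair_inject less_trans)

lemma Ptot: "length b = k \<Longrightarrow> length b' = k \<Longrightarrow> (b, b') \<in> Pset Cs \<or> (b', b) \<in> Pset Cs"
proof -
  assume "length b = k" "length b' = k"
  then obtain i x j y where r: "i < length Cs" "x < length (Cs ! i)" "Cs ! i ! x = b"
     "j < length Cs" "y < length (Cs ! j)" "Cs ! j ! y = b'" using srj by metis
  consider "i < j" | "j < i" | "i = j" "x \<le> y" | "i = j" "y \<le> x" by linarith
  then show ?thesis
  proof cases
    case 1 then show ?thesis using r Pchar by blast
  next
    case 2 then show ?thesis using r Pchar by blast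
  next
    case 3 then show ?thesis using r Pchar by blast
  next
    case 4 then show ?thesis using r Pchar by blast
  qed
qed

lemma Pas: "(b, b') \<in> Pset Cs \<Longrightarrow> (b', b) \<in> Pset Cs \<Longrightarrow> b = b'"
proof -
  assume a1: "(b, b') \<in> Pset Cs" and a2: "(b', b) \<in> Pset Cs"
  obtain i j x y where r: "(b, b') = (Cs ! i ! x, Cs ! j ! y)" "j < length Cs"
   "x < length (Cs ! i)" "y < length (Cs ! j)" "i < j \<or> i = j \<and> x \<le> y" using a1 Pchar by blast
  obtain i' j' x' y' where r': "(b', b) = (Cs ! i' ! x', Cs ! j' ! y')" "j' < length Cs"
   "x' < length (Cs ! i')" "y' < length (Cs ! j')" "i' < j' \<or> i' = j' \<and> x' \<le> y'" using a2 Pchar by blast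
  have ilt: "i < length Cs" "i' < length Cs" using r r' by auto
  have "i = j' \<and> x = y'" using inj[of i x j' y'] r r' ilt by auto
  moreover have "j = i' \<and> y = x'" using inj[of j y i' x'] r r' ilt by auto
  ultimately show ?thesis using r r' by auto
qed

lemma bij: "bij_betw (\<lambda>(b, b'). {b @ rev b', b' @ rev b}) (Pset Cs) (quot (2 * k) (Gk k))"
  unfolding bij_betw_def
proof
  show "inj_on (\<lambda>(b, b'). {b @ rev b', b' @ rev b}) (Pset Cs)"
  proof (rule inj_onI)
    fix p q assume p: "p \<in> Pset Cs" and q: "q \<in> Pset Cs"
      and e: "(case p of (b, b') \<Rightarrow> {b @ rev b', b' @ rev b}) = (case q of (b, b') \<Rightarrow> {b @ rev b', b' @ rev b})"
    obtain b b' c c' where pq: "p = (b, b')" "q = (c, c')" by (cases p, cases q) auto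
    have l: "length b = k" "length b' = k" "length c = k" "length c' = k" using Plen p q pq by auto
    have "c @ rev c' = b @ rev b' \<or> c @ rev c' = b' @ rev b" using e pq by (auto simp: doubleton_eq_iff)
    then show "p = q"
    proof
      assume "c @ rev c' = b @ rev b'"
      then show ?thesis using l pq by (simp add: append_eq_append_conv)
    next
      assume "c @ rev c' = b' @ rev b"
      then have "c = b'" "c' = b" using l by (auto simp: append_eq_append_conv)
      then have "b = b'" using Pas p q pq by auto
      then show ?thesis using pq \<open>c = b'\<close> \<open>c' = b\<close> by simp
    qed
  qed
next
  show "(\<lambda>(b, b'). {b @ rev b', b' @ rev b}) ` Pset Cs = quot (2 * k) (Gk k)"
    unfolding quot_eq
  proof
    show "(\<lambda>(b, b'). {b @ rev b', b' @ rev b}) ` Pset Cs \<subseteq> (\<lambda>x. {x, rev x}) ` Bk (2 * k)"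
    proof
      fix z assume "z \<in> (\<lambda>(b, b'). {b @ rev b', b' @ rev b}) ` Pset Cs"
      then obtain b b' where "(b, b') \<in> Pset Cs" "z = {b @ rev b', b' @ rev b}" by auto
      moreover then have "length b = k" "length b' = k" using Plen by auto
      ultimately show "z \<in> (\<lambda>x. {x, rev x}) ` Bk (2 * k)"
        by (intro image_eqI[of _ _ "b @ rev b'"]) (auto simp: Bk_def)
    qed
  next
    show "(\<lambda>x. {x, rev x}) ` Bk (2 * k) \<subseteq> (\<lambda>(b, b'). {b @ rev b', b' @ rev b}) ` Pset Cs"
    proof
      fix z assume "z \<in> (\<lambda>x. {x, rev x}) ` Bk (2 * k)"
      then obtain x where x: "length x = 2 * k" "z = {x, rev x}" by (auto simp: Bk_def)
      define b b' where "b = take k x" and "b' = rev (drop k x)"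
      have xe: "x = b @ rev b'" by (simp add: b_def b'_def)
      have l: "length b = k" "length b' = k" using x by (auto simp: b_def b'_def)
      have z: "z = {b @ rev b', b' @ rev b}" using x xe by auto
      from Ptot[OF l] show "z \<in> (\<lambda>(b, b'). {b @ rev b', b' @ rev b}) ` Pset Cs"
      proof
        assume "(b, b') \<in> Pset Cs" then show ?thesis using z by force
      next
        assume "(b', b) \<in> Pset Cs" then show ?thesis using z by (intro image_eqI[of _ _ "(b', b)"]) auto
      qed
    qed
  qed
qed

end

theorem mainTheorem9:
  fixes k :: nat and Cs :: "bool list list list"
  assumes "k \<ge> 1"
    and "is_scd k Cs"
    and "sorted_wrt (\<ge>) (map length Cs)"
  shows "(\<exists>Ds :: (bool list \<times> bool list) list list.
            (\<forall>D\<in>set Ds. sym_chain (2 * k) (map emb D) \<and> set D \<subseteq> Pset Cs) \<and>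
            (\<forall>p\<in>Pset Cs. \<exists>!(i, j). i < length Ds \<and> j < length (Ds ! i) \<and> Ds ! i ! j = p))
       \<and> bij_betw (\<lambda>(b, b'). {b @ rev b', b' @ rev b}) (Pset Cs) (quot (2 * k) (Gk k))
       \<and> (\<forall>p\<in>Pset Cs. \<forall>q\<in>Pset Cs. subs (emb p) (emb q) \<longrightarrow>
            orb_le ((\<lambda>(b, b'). {b @ rev b', b' @ rev b}) p) ((\<lambda>(b, b'). {b @ rev b', b' @ rev b}) q))"
proof -
  interpret ctx k Cs using assms by unfold_locales auto
  have "\<forall>p\<in>Pset Cs. \<forall>q\<in>Pset Cs. subs (emb p) (emb q) \<longrightarrow>
            orb_le ((\<lambda>(b, b'). {b @ rev b', b' @ rev b}) p) ((\<lambda>(b, b'). {b @ rev b', b' @ rev b}) q)"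
    unfolding orb_le_def emb_def by auto
  then show ?thesis using part bij by blast
qed

end
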